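(* Let $\Omega$ be a finite set, $m\in\Delta(\Omega)$, $\lambda\in[0,1)$, and consider the irreducible Markov chain on $\Omega$ with transitions $\pi(\omega\mid\omega)=(1-\lambda)m(\omega)+\lambda$ and $\pi(\omega'\mid\omega)=(1-\lambda)m(\omega')$ for $\omega'\ne\omega$ (so $\phi(p)=m+\lambda(p-m)$). Let $r:\Omega\to\mathbb{R}$ and $\delta\in[0,1)$. Let $k\in\{1,\dots,|\Omega^-|\}$ be such that $m\in\bar{\mathcal{O}}(k)$. Then for every initial belief $p_1\in\bar{\mathcal{O}}(k)$, the payoff of the greedy strategy satisfies $\gamma(p_1)=\gamma_*(p_1)$; in particular $\sigma_*$ is optimal at every $p_1\in\bar{\mathcal{O}}(k)$.
   Context: Identify each $\omega\in\Omega$ with a unit vector of $\mathbb{R}^\Omega$ and $\Delta(\Omega)$ with the unit simplex. For $p\in\Delta(\Omega)$ let $\langle p,r\rangle=\sum_\omega p(\omega)r(\omega)$; $I=\{p:\langle p,r\rangle\ge0\}$, $J=\Delta(\Omega)\setminus I$; $\Omega^+=\{r\ge0\}$, $\Omega^-=\{r<0\}$. Order $\Omega^-=\{\omega_1,\dots,\omega_{|\Omega^-|}\}$ so that $0>r(\omega_1)\ge\dots\ge r(\omega_{|\Omega^-|})$, and set $L_k(p)=\sum_{\omega\in\Omega^+}p(\omega)r(\omega)+\sum_{i\le k}p(\omega_i)r(\omega_i)$ for $k\ge1$, and $L_0\equiv1$. Let $\bar{\mathcal{O}}(k)=\{p\in\Delta(\Omega): L_{k-1}(p)\ge0\ge L_k(p)\}$.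 $\phi(q)=qM$ with $M$ the transition matrix. $\mathcal{S}(p)$ is the set of Borel probability measures on $\Delta(\Omega)$ with mean $p$, $\mu_p$ the Dirac mass at $p$. Decision problem from $p_1$: at each stage $n$, at belief $p_n$, the advisor chooses $\mu\in\mathcal{S}(p_n)$ (possibly depending on the past), a posterior $q_n\sim\mu$ is drawn, the stage payoff is $\mathbf{1}_{\{q_n\in I\}}$, and $p_{n+1}=\phi(q_n)$. A strategy's payoff is $\mathbb{E}[(1-\delta)\sum_{n\ge1}\delta^{n-1}\mathbf{1}_{\{q_n\in I\}}]$; $V_\delta(p_1)$ is the maximal payoff; optimal means achieving it. The greedy strategy $\sigma_*$: at $p\in I$ choose $\mu_p$; at $p\in J$ choose a two-point splitting $p=a_Iq_I+a_Jq_J$ maximizing $a_I$ subject to $q_I\in I$, $q_J\in\Delta(\Omega)$, $a_I+a_J=1$, $a_I,a_J\ge0$. $\gamma(p)$ denotes the payoff of $\sigma_*$ from initial belief $p$. Let $\widehat r(p)=\max_{\mu\in\mathcal{S}(p)}\mu(\{q\in I\})$ and $\gamma_*(p_1)=(1-\delta)\sum_{n\ge1}\delta^{n-1}\widehat r(\phi^{(n-1)}(p_1))$. *)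

theory Defs
  imports "HOL-Analysis.Analysis" "HOL-Probability.Probability"
begin

definition bsimplex :: "(real^'w::finite) set" where
  "bsimplex = {p. (\<forall>w. 0 \<le> p $ w) \<and> (\<Sum>w\<in>UNIV. p $ w) = 1}"

definition pairing :: "real^'w::finite \<Rightarrow> ('w \<Rightarrow> real) \<Rightarrow> real" where
  "pairing p r = (\<Sum>w\<in>UNIV. p $ w * r w)"

definition Iset :: "('w::finite \<Rightarrow> real) \<Rightarrow> (real^'w) set" where
  "Iset r = {p \<in> bsimplex. pairing p r \<ge> 0}"

definition Jset :: "('w::finite \<Rightarrow> real) \<Rightarrow> (real^'w) set" where
  "Jset r = bsimplex - Iset r"

definition Opos :: "('w::finite \<Rightarrow> real) \<Rightarrow> 'w set" where
  "Opos r = {w. r w \<ge> 0}"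

definition Oneg :: "('w::finite \<Rightarrow> real) \<Rightarrow> 'w set" where
  "Oneg r = {w. r w < 0}"

definition neg_order :: "('w::finite \<Rightarrow> real) \<Rightarrow> (nat \<Rightarrow> 'w) \<Rightarrow> bool" where
  "neg_order r e \<longleftrightarrow> bij_betw e {1..card (Oneg r)} (Oneg r) \<and>
     (\<forall>i j. 1 \<le> i \<longrightarrow> i \<le> j \<longrightarrow> j \<le> card (Oneg r) \<longrightarrow> r (e j) \<le> r (e i))"

definition Lk :: "('w::finite \<Rightarrow> real) \<Rightarrow> (nat \<Rightarrow> 'w) \<Rightarrow> nat \<Rightarrow> real^'w \<Rightarrow> real" where
  "Lk r e k p = (if k = 0 then 1 else
     (\<Sum>w\<in>Opos r. p $ w * r w) + (\<Sum>i\<in>{1..k}. p $ (e i) * r (e i)))"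

definition Obar :: "('w::finite \<Rightarrow> real) \<Rightarrow> (nat \<Rightarrow> 'w) \<Rightarrow> nat \<Rightarrow> (real^'w) set" where
  "Obar r e k = {p \<in> bsimplex. Lk r e (k - 1) p \<ge> 0 \<and> 0 \<ge> Lk r e k p}"

definition phi :: "('w::finite \<Rightarrow> 'w \<Rightarrow> real) \<Rightarrow> real^'w \<Rightarrow> real^'w" where
  "phi M q = (\<chi> w'. \<Sum>w\<in>UNIV. q $ w * M w w')"

definition irreducible_chain :: "('w \<Rightarrow> 'w \<Rightarrow> real) \<Rightarrow> bool" where
  "irreducible_chain M \<longleftrightarrow> (\<forall>a b. (a, b) \<in> {(x, y). M x y > 0}\<^sup>*)"

definition splittings :: "real^'w::finite \<Rightarrow> (real^'w) measure set" where
  "splittings p = {\<mu>. sets \<mu> = sets borel \<and> prob_space \<mu> \<and> emeasure \<mu> bsimplex = 1 \<and>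
      integrable \<mu> (\<lambda>q. q) \<and> integral\<^sup>L \<mu> (\<lambda>q. q) = p}"

text \<open>Histories are the lists of past posteriors; the current belief is p1 initially
  and phi of the last posterior afterwards.  A strategy maps histories to splittings.\<close>
definition cur_belief :: "('w::finite \<Rightarrow> 'w \<Rightarrow> real) \<Rightarrow> real^'w \<Rightarrow> (real^'w) list \<Rightarrow> real^'w" where
  "cur_belief M p1 h = (if h = [] then p1 else phi M (last h))"

definition valid_strategy ::
  "('w::finite \<Rightarrow> 'w \<Rightarrow> real) \<Rightarrow> real^'w \<Rightarrow> ((real^'w) list \<Rightarrow> (real^'w) measure) \<Rightarrow> bool" where
  "valid_strategy M p1 \<sigma> \<longleftrightarrow> (\<forall>h\<in>lists bsimplex. \<sigma> h \<in> splittings (cur_belief M p1 h))"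

fun trunc_payoff ::
  "('w::finite \<Rightarrow> real) \<Rightarrow> real \<Rightarrow> ((real^'w) list \<Rightarrow> (real^'w) measure) \<Rightarrow>
   (real^'w) list \<Rightarrow> nat \<Rightarrow> ennreal" where
  "trunc_payoff r \<delta> \<sigma> h 0 = 0"
| "trunc_payoff r \<delta> \<sigma> h (Suc N) =
     (\<integral>\<^sup>+ q. ennreal ((1 - \<delta>) * indicator (Iset r) q) + ennreal \<delta> * trunc_payoff r \<delta> \<sigma> (h @ [q]) N \<partial>\<sigma> h)"

text \<open>Payoff E[(1-delta) sum_n delta^(n-1) 1{q_n in I}] (limit of truncations, monotone convergence).\<close>
definition payoff ::
  "('w::finite \<Rightarrow> real) \<Rightarrow> real \<Rightarrow> ((real^'w) list \<Rightarrow> (real^'w) measure) \<Rightarrow> real" where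
  "payoff r \<delta> \<sigma> = enn2real (SUP N. trunc_payoff r \<delta> \<sigma> [] N)"

definition Vdelta :: "('w::finite \<Rightarrow> 'w \<Rightarrow> real) \<Rightarrow> ('w \<Rightarrow> real) \<Rightarrow> real \<Rightarrow> real^'w \<Rightarrow> real" where
  "Vdelta M r \<delta> p1 = (SUP \<sigma>\<in>{\<sigma>. valid_strategy M p1 \<sigma>}. payoff r \<delta> \<sigma>)"

definition two_point :: "real \<Rightarrow> real^'w::finite \<Rightarrow> real \<Rightarrow> real^'w \<Rightarrow> (real^'w) measure \<Rightarrow> bool" where
  "two_point aI qI aJ qJ \<mu> \<longleftrightarrow> sets \<mu> = sets borel \<and>
     (\<forall>A\<in>sets borel. emeasure \<mu> A = ennreal (aI * indicator A qI + aJ * indicator A qJ))"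

definition feasible_split :: "('w::finite \<Rightarrow> real) \<Rightarrow> real^'w \<Rightarrow> real \<Rightarrow> real^'w \<Rightarrow> real \<Rightarrow> real^'w \<Rightarrow> bool" where
  "feasible_split r p aI qI aJ qJ \<longleftrightarrow> 0 \<le> aI \<and> 0 \<le> aJ \<and> aI + aJ = 1 \<and>
     qI \<in> Iset r \<and> qJ \<in> bsimplex \<and> p = aI *\<^sub>R qI + aJ *\<^sub>R qJ"

definition greedy_selection :: "('w::finite \<Rightarrow> real) \<Rightarrow> (real^'w \<Rightarrow> (real^'w) measure) \<Rightarrow> bool" where
  "greedy_selection r g \<longleftrightarrow>
     (\<forall>p\<in>Iset r. g p = return borel p) \<and>
     (\<forall>p\<in>Jset r. \<exists>aI qI aJ qJ. feasible_split r p aI qI aJ qJ \<and>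
         (\<forall>bI sI bJ sJ. feasible_split r p bI sI bJ sJ \<longrightarrow> bI \<le> aI) \<and>
         two_point aI qI aJ qJ (g p))"

definition greedy_strategy ::
  "('w::finite \<Rightarrow> 'w \<Rightarrow> real) \<Rightarrow> real^'w \<Rightarrow> (real^'w \<Rightarrow> (real^'w) measure) \<Rightarrow> (real^'w) list \<Rightarrow> (real^'w) measure" where
  "greedy_strategy M p1 g = (\<lambda>h. g (cur_belief M p1 h))"

definition rhat :: "('w::finite \<Rightarrow> real) \<Rightarrow> real^'w \<Rightarrow> real" where
  "rhat r p = Sup {measure \<mu> (Iset r) | \<mu>. \<mu> \<in> splittings p}"

definition gamma_star :: "('w::finite \<Rightarrow> 'w \<Rightarrow> real) \<Rightarrow> ('w \<Rightarrow> real) \<Rightarrow> real \<Rightarrow> real^'w \<Rightarrow> real" where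
  "gamma_star M r \<delta> p1 = (\<Sum>n. (1 - \<delta>) * \<delta> ^ n * rhat r ((phi M ^^ n) p1))"

definition mix_chain :: "real^'w::finite \<Rightarrow> real \<Rightarrow> 'w \<Rightarrow> 'w \<Rightarrow> real" where
  "mix_chain m lam w w' = (1 - lam) * m $ w' + (if w' = w then lam else 0)"

end

theory Submission
  imports Defs
begin


definition fw :: "('w::finite \<Rightarrow> real) \<Rightarrow> real \<Rightarrow> 'w \<Rightarrow> real" where
  "fw r c w = (if r w > c then 1 - r w / c else 0)"

definition fc :: "('w::finite \<Rightarrow> real) \<Rightarrow> real \<Rightarrow> real^'w \<Rightarrow> real" where
  "fc r c p = (\<Sum>w\<in>UNIV. p $ w * fw r c w)"

lemma linear_fc: "linear (fc r c)"
  by (rule linearI) (simp_all add: fc_def algebra_simps sum.distrib sum_distrib_left)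

lemma linear_pairing: "linear (\<lambda>p. pairing p r)"
  by (rule linearI) (simp_all add: pairing_def algebra_simps sum.distrib sum_distrib_left)

lemma pairing_add[simp]: "pairing (x + y) r = pairing x r + pairing y r"
  by (simp add: pairing_def algebra_simps sum.distrib)
lemma pairing_scale[simp]: "pairing (t *\<^sub>R x) r = t * pairing x r"
  by (simp add: pairing_def algebra_simps sum_distrib_left)
lemma fc_add[simp]: "fc r c (x + y) = fc r c x + fc r c y"
  by (simp add: fc_def algebra_simps sum.distrib)
lemma fc_scale[simp]: "fc r c (t *\<^sub>R x) = t * fc r c x"
  by (simp add: fc_def algebra_simps sum_distrib_left)

lemma fw_nonneg: "c < 0 \<Longrightarrow> 0 \<le> fw r c w"
  unfolding fw_def by (auto simp: field_simps)

lemma fw_ge: "c < 0 \<Longrightarrow> 1 - r w / c \<le> fw r c w"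
  unfolding fw_def by (auto simp: field_simps)

lemma fc_nonneg: "c < 0 \<Longrightarrow> p \<in> bsimplex \<Longrightarrow> 0 \<le> fc r c p"
  unfolding fc_def bsimplex_def by (auto intro!: sum_nonneg simp: fw_nonneg)

lemma fc_ge1: assumes "c < 0" "p \<in> Iset r" shows "1 \<le> fc r c p"
proof -
  have p: "p \<in> bsimplex" "0 \<le> pairing p r" using assms(2) by (auto simp: Iset_def)
  have "1 \<le> 1 - pairing p r / c" using p(2) assms(1) by (simp add: divide_nonneg_neg)
  also have "\<dots> = (\<Sum>w\<in>UNIV. p $ w * (1 - r w / c))"
    using p(1) by (simp add: bsimplex_def pairing_def algebra_simps sum_subtractf sum_divide_distrib[symmetric])
  also have "\<dots> \<le> fc r c p" unfolding fc_def
    using p(1) fw_ge[OF assms(1)] by (auto intro!: sum_mono mult_left_mono simp: bsimplex_def)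
  finally show ?thesis .
qed

lemma fc_ind: "c < 0 \<Longrightarrow> p \<in> bsimplex \<Longrightarrow> indicator (Iset r) p \<le> fc r c p"
  using fc_ge1 fc_nonneg by (auto simp: indicator_def)

definition Gset :: "('w::finite \<Rightarrow> real) \<Rightarrow> real \<Rightarrow> (real^'w) set" where
  "Gset r c = {p \<in> bsimplex. \<exists>x::real^'w. (\<forall>w. 0 \<le> x $ w \<and> x $ w \<le> p $ w) \<and>
      0 \<le> pairing x r \<and> (\<Sum>w\<in>UNIV. x $ w) = fc r c p}"

lemma bsimplex_conv: assumes "p \<in> bsimplex" "q \<in> bsimplex" "0 \<le> t" "t \<le> 1"
  shows "t *\<^sub>R p + (1 - t) *\<^sub>R q \<in> bsimplex"
  using assms by (auto simp: bsimplex_def sum.distrib sum_distrib_left[symmetric])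

lemma Gset_conv: assumes "p \<in> Gset r c" "q \<in> Gset r c" "0 \<le> t" "t \<le> 1"
  shows "t *\<^sub>R p + (1 - t) *\<^sub>R q \<in> Gset r c"
proof -
  obtain x where x: "\<forall>w. 0 \<le> x $ w \<and> x $ w \<le> p $ w" "0 \<le> pairing x r" "(\<Sum>w\<in>UNIV. x $ w) = fc r c p"
    using assms(1) by (auto simp: Gset_def)
  obtain y where y: "\<forall>w. 0 \<le> y $ w \<and> y $ w \<le> q $ w" "0 \<le> pairing y r" "(\<Sum>w\<in>UNIV. y $ w) = fc r c q"
    using assms(2) by (auto simp: Gset_def)
  let ?z = "t *\<^sub>R x + (1 - t) *\<^sub>R y"
  have "\<forall>w. 0 \<le> ?z $ w \<and> ?z $ w \<le> (t *\<^sub>R p + (1 - t) *\<^sub>R q) $ w"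
    using x(1) y(1) assms(3,4) by (auto intro!: add_mono mult_left_mono)
  moreover have "pairing ?z r = t * pairing x r + (1 - t) * pairing y r"
    by simp
  hence "0 \<le> pairing ?z r" using x(2) y(2) assms(3,4) by simp
  moreover have "(\<Sum>w\<in>UNIV. ?z $ w) = fc r c (t *\<^sub>R p + (1 - t) *\<^sub>R q)"
    using x(3) y(3) by (simp add: sum.distrib sum_distrib_left[symmetric])
  ultimately show ?thesis using bsimplex_conv[OF _ _ assms(3,4), of p q] assms(1,2) unfolding Gset_def by blast
qed



lemma Lk_eq:
  assumes e: "neg_order r e" and j: "1 \<le> j" "j \<le> card (Oneg r)"
  shows "Lk r e j p = (\<Sum>w\<in>Opos r \<union> e ` {1..j}. p $ w * r w)"
proof -
  have bij: "bij_betw e {1..card (Oneg r)} (Oneg r)" using e by (simp add: neg_order_def)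
  have inj: "inj_on e {1..j}" using bij j by (auto simp: bij_betw_def intro: inj_on_subset)
  have sub: "e ` {1..j} \<subseteq> Oneg r" using bij j by (auto simp: bij_betw_def)
  have disj: "Opos r \<inter> e ` {1..j} = {}" using sub by (auto simp: Opos_def Oneg_def)
  have "(\<Sum>w\<in>Opos r \<union> e ` {1..j}. p $ w * r w) = (\<Sum>w\<in>Opos r. p $ w * r w) + (\<Sum>w\<in>e ` {1..j}. p $ w * r w)"
    by (rule sum.union_disjoint) (use disj in auto)
  also have "(\<Sum>w\<in>e ` {1..j}. p $ w * r w) = (\<Sum>i\<in>{1..j}. p $ e i * r (e i))"
    by (subst sum.reindex[OF inj]) simp
  finally show ?thesis using j by (simp add: Lk_def)
qed

lemma Obar_sub_G:
  assumes e: "neg_order r e" and k: "1 \<le> k" "k \<le> card (Oneg r)" and p: "p \<in> Obar r e k"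
  shows "p \<in> Gset r (r (e k))"
proof -
  define c where "c = r (e k)"
  define U where "U j = Opos r \<union> e ` {1..j}" for j
  define S where "S = {w. r w > c}"
  define T where "T = {w. r w = c}"
  have bij: "bij_betw e {1..card (Oneg r)} (Oneg r)" using e by (simp add: neg_order_def)
  have mono: "\<And>i j. 1 \<le> i \<Longrightarrow> i \<le> j \<Longrightarrow> j \<le> card (Oneg r) \<Longrightarrow> r (e j) \<le> r (e i)"
    using e by (simp add: neg_order_def)
  have ekneg: "e k \<in> Oneg r" using bij k by (auto simp: bij_betw_def)
  hence c0: "c < 0" by (simp add: c_def Oneg_def)
  have pb: "p \<in> bsimplex" and p0: "\<And>w. 0 \<le> p $ w" using p by (auto simp: Obar_def bsimplex_def)
  have Lk1: "0 \<le> Lk r e (k - 1) p" and Lk2: "Lk r e k p \<le> 0" using p by (auto simp: Obar_def)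
  have SU: "S \<subseteq> U (k - 1)"
  proof
    fix w assume "w \<in> S"
    hence wc: "r w > c" by (simp add: S_def)
    show "w \<in> U (k - 1)"
    proof (cases "r w \<ge> 0")
      case True thus ?thesis by (simp add: U_def Opos_def)
    next
      case False
      hence "w \<in> Oneg r" by (simp add: Oneg_def)
      hence "w \<in> e ` {1..card (Oneg r)}" using bij by (simp add: bij_betw_def)
      then obtain i where i: "i \<in> {1..card (Oneg r)}" "w = e i" by blast
      have "i < k"
      proof (rule ccontr)
        assume "\<not> i < k"
        hence "r (e i) \<le> r (e k)" using mono[of k i] i k by auto
        thus False using wc i by (simp add: c_def)
      qed
      thus ?thesis using i by (auto simp: U_def)
    qed
  qed
  have US: "U k \<subseteq> S \<union> T"
  proof
    fix w assume "w \<in> U k"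
    then consider "w \<in> Opos r" | i where "i \<in> {1..k}" "w = e i" by (auto simp: U_def)
    thus "w \<in> S \<union> T"
    proof cases
      case 1 thus ?thesis using c0 by (auto simp: Opos_def S_def T_def)
    next
      case 2 thus ?thesis using mono[of i k] k by (auto simp: S_def T_def c_def)
    qed
  qed
  have A: "0 \<le> (\<Sum>w\<in>U (k - 1). p $ w * r w)"
  proof (cases "k = 1")
    case True thus ?thesis using p0 by (auto simp: U_def Opos_def intro!: sum_nonneg)
  next
    case False thus ?thesis using Lk1 Lk_eq[OF e, of "k - 1" p] k by (simp add: U_def)
  qed
  have B: "(\<Sum>w\<in>U k. p $ w * r w) \<le> 0" using Lk2 Lk_eq[OF e k, of p] by (simp add: U_def)
  have SA: "(\<Sum>w\<in>U (k - 1). p $ w * r w) \<le> (\<Sum>w\<in>S. p $ w * r w)"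
  proof -
    have "(\<Sum>w\<in>U (k - 1). p $ w * r w) = (\<Sum>w\<in>U (k - 1) - S. p $ w * r w) + (\<Sum>w\<in>S. p $ w * r w)"
      by (rule sum.subset_diff[OF SU]) simp
    moreover have "(\<Sum>w\<in>U (k - 1) - S. p $ w * r w) \<le> 0"
      using p0 c0 by (intro sum_nonpos) (auto simp: S_def intro: mult_nonneg_nonpos)
    ultimately show ?thesis by simp
  qed
  have STB: "(\<Sum>w\<in>S \<union> T. p $ w * r w) \<le> (\<Sum>w\<in>U k. p $ w * r w)"
  proof -
    have "(\<Sum>w\<in>S \<union> T. p $ w * r w) = (\<Sum>w\<in>(S \<union> T) - U k. p $ w * r w) + (\<Sum>w\<in>U k. p $ w * r w)"
      by (rule sum.subset_diff[OF US]) simp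
    moreover have "(\<Sum>w\<in>(S \<union> T) - U k. p $ w * r w) \<le> 0"
      using p0 by (intro sum_nonpos) (auto simp: U_def Opos_def intro: mult_nonneg_nonpos)
    ultimately show ?thesis by simp
  qed
  define PT where "PT = (\<Sum>w\<in>T. p $ w)"
  define PS where "PS = (\<Sum>w\<in>S. p $ w * r w)"
  have PT0: "0 \<le> PT" using p0 by (simp add: PT_def sum_nonneg)
  have "(\<Sum>w\<in>S \<union> T. p $ w * r w) = PS + c * PT"
    unfolding PS_def PT_def
    by (subst sum.union_disjoint) (auto simp: S_def T_def sum_distrib_left mult.commute)
  hence PSle: "PS \<le> - c * PT" using STB B by simp
  have PS0: "0 \<le> PS" using A SA by (simp add: PS_def)
  define s where "s = (if PT = 0 then 0 else PS / (- c * PT))"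
  have s01: "0 \<le> s \<and> s \<le> 1"
  proof (cases "PT = 0")
    case False
    hence pos: "0 < - c * PT" using PT0 c0 by (simp add: mult_neg_pos)
    have "0 \<le> PS / (- c * PT)" by (rule divide_nonneg_pos[OF PS0 pos])
    moreover have "PS / (- c * PT) \<le> 1" using divide_le_eq_1_pos[OF pos, of PS] PSle by linarith
    ultimately show ?thesis using False by (simp add: s_def)
  qed (simp add: s_def)
  have sPT: "s * PT = - PS / c" using PS0 PSle PT0 c0 by (auto simp: s_def field_simps)
  define x :: "real^'a" where "x = (\<chi> w. if w \<in> S then p $ w else if w \<in> T then s * p $ w else 0)"
  have STd: "S \<inter> T = {}" by (auto simp: S_def T_def)
  have "\<forall>w. 0 \<le> x $ w \<and> x $ w \<le> p $ w"
    using p0 s01 by (auto simp: x_def intro: mult_left_le_one_le)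
  moreover have "pairing x r = PS + s * c * PT"
  proof -
    have "pairing x r = (\<Sum>w\<in>UNIV. (if w \<in> S then p $ w * r w else 0) + (if w \<in> T then s * c * p $ w else 0))"
      unfolding pairing_def x_def using STd by (intro sum.cong) (auto simp: T_def)
    also have "\<dots> = PS + s * c * PT"
      by (simp add: sum.distrib sum.If_cases PS_def PT_def sum_distrib_left)
    finally show ?thesis .
  qed
  hence "pairing x r = 0" using sPT c0 by (simp add: field_simps)
  moreover have "(\<Sum>w\<in>UNIV. x $ w) = fc r c p"
  proof -
    have "(\<Sum>w\<in>UNIV. x $ w) = (\<Sum>w\<in>UNIV. (if w \<in> S then p $ w else 0) + (if w \<in> T then s * p $ w else 0))"
      unfolding x_def using STd by (intro sum.cong) auto
    also have "\<dots> = (\<Sum>w\<in>S. p $ w) + s * PT"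
      by (simp add: sum.distrib sum.If_cases PT_def sum_distrib_left)
    also have "\<dots> = (\<Sum>w\<in>S. p $ w) - PS / c" using sPT by simp
    also have "\<dots> = (\<Sum>w\<in>S. p $ w * (1 - r w / c))"
      by (simp add: PS_def algebra_simps sum_subtractf sum_divide_distrib)
    also have "\<dots> = (\<Sum>w\<in>UNIV. if w \<in> S then p $ w * (1 - r w / c) else 0)"
      by (simp add: sum.If_cases)
    also have "\<dots> = fc r c p"
      unfolding fc_def fw_def by (intro sum.cong) (auto simp: S_def)
    finally show ?thesis .
  qed
  ultimately show ?thesis using pb unfolding Gset_def c_def by auto
qed



lemma phi_add[simp]: "phi M (x + y) = phi M x + phi M y"
  by (simp add: phi_def vec_eq_iff algebra_simps sum.distrib)
lemma phi_scale[simp]: "phi M (t *\<^sub>R x) = t *\<^sub>R phi M x"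
  by (simp add: phi_def vec_eq_iff algebra_simps sum_distrib_left)

lemma phiN_add[simp]: "(phi M ^^ n) (x + y) = (phi M ^^ n) x + (phi M ^^ n) y"
  by (induction n) auto
lemma phiN_scale[simp]: "(phi M ^^ n) (t *\<^sub>R x) = t *\<^sub>R (phi M ^^ n) x"
  by (induction n) auto

lemma phi_mix:
  assumes "(\<Sum>w\<in>UNIV. q $ w) = 1"
  shows "phi (mix_chain m lam) q = (1 - lam) *\<^sub>R m + lam *\<^sub>R q"
proof -
  have "(\<Sum>w\<in>UNIV. q $ w * ((1 - lam) * m $ w' + (if w' = w then lam else 0)))
      = (1 - lam) * m $ w' * (\<Sum>w\<in>UNIV. q $ w) + lam * q $ w'" for w'
  proof -
    have "(\<Sum>w\<in>UNIV. q $ w * ((1 - lam) * m $ w' + (if w' = w then lam else 0)))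
       = (\<Sum>w\<in>UNIV. (1 - lam) * m $ w' * q $ w + (if w = w' then lam * q $ w else 0))"
      by (intro sum.cong) (auto simp: algebra_simps)
    also have "\<dots> = (1 - lam) * m $ w' * (\<Sum>w\<in>UNIV. q $ w) + lam * q $ w'"
      by (simp add: sum.distrib sum_distrib_left[symmetric])
    finally show ?thesis .
  qed
  thus ?thesis using assms by (simp add: phi_def mix_chain_def vec_eq_iff)
qed

lemma phi_bs:
  assumes "m \<in> bsimplex" "0 \<le> lam" "lam \<le> 1" "q \<in> bsimplex"
  shows "phi (mix_chain m lam) q \<in> bsimplex"
proof -
  have "(\<Sum>w\<in>UNIV. q $ w) = 1" using assms(4) by (simp add: bsimplex_def)
  hence "phi (mix_chain m lam) q = (1 - lam) *\<^sub>R m + (1 - (1 - lam)) *\<^sub>R q"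
    by (simp add: phi_mix)
  thus ?thesis using bsimplex_conv[OF assms(1,4), of "1 - lam"] assms by simp
qed

lemma phi_G:
  assumes "m \<in> Gset r c" "0 \<le> lam" "lam \<le> 1" "q \<in> Gset r c"
  shows "phi (mix_chain m lam) q \<in> Gset r c"
proof -
  have "(\<Sum>w\<in>UNIV. q $ w) = 1" using assms(4) by (simp add: bsimplex_def Gset_def)
  hence "phi (mix_chain m lam) q = (1 - lam) *\<^sub>R m + (1 - (1 - lam)) *\<^sub>R q"
    by (simp add: phi_mix)
  thus ?thesis using Gset_conv[OF assms(1,4), of "1 - lam"] assms by simp
qed

lemma phiN_G:
  assumes "m \<in> Gset r c" "0 \<le> lam" "lam \<le> 1" "q \<in> Gset r c"
  shows "(phi (mix_chain m lam) ^^ n) q \<in> Gset r c"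
  using assms by (induction n) (auto intro: phi_G)

lemma phiN_bs:
  assumes "m \<in> bsimplex" "0 \<le> lam" "lam \<le> 1" "q \<in> bsimplex"
  shows "(phi (mix_chain m lam) ^^ n) q \<in> bsimplex"
  using assms by (induction n) (auto intro: phi_bs)

lemma closed_bsimplex: "closed (bsimplex :: (real^'w::finite) set)"
  unfolding bsimplex_def
  by (intro closed_Collect_conj closed_Collect_all closed_Collect_le closed_Collect_eq continuous_intros)

lemma bsimplex_borel[measurable]: "bsimplex \<in> sets borel"
  using closed_bsimplex by (rule borel_closed)

lemma two_point_nn:
  assumes tp: "two_point aI qI aJ qJ \<mu>" and a: "0 \<le> aI" "0 \<le> aJ"
  shows "(\<integral>\<^sup>+ q. f q \<partial>\<mu>) = ennreal aI * f qI + ennreal aJ * f qJ"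
proof -
  have sets: "sets \<mu> = sets borel" and em: "\<And>A. A \<in> sets borel \<Longrightarrow> emeasure \<mu> A = ennreal (aI * indicator A qI + aJ * indicator A qJ)"
    using tp by (auto simp: two_point_def)
  have sp: "space \<mu> = UNIV" using sets_eq_imp_space_eq[OF sets] by simp
  have fin: "{qI, qJ} \<in> sets borel" by (intro borel_closed finite_imp_closed) auto
  have N: "UNIV - {qI, qJ} \<in> null_sets \<mu>"
  proof (rule null_setsI)
    show "UNIV - {qI, qJ} \<in> sets \<mu>" using fin sets by auto
    show "emeasure \<mu> (UNIV - {qI, qJ}) = 0" using fin by (subst em) auto
  qed
  have ae: "AE q in \<mu>. q \<in> {qI, qJ}"
    by (rule AE_I'[OF N]) (auto simp: sp)
  have s1: "{qI} \<in> sets \<mu>" "{qJ} - {qI} \<in> sets \<mu>" using sets by auto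
  have "(\<integral>\<^sup>+ q. f q \<partial>\<mu>) = (\<integral>\<^sup>+ q. f qI * indicator {qI} q + f qJ * indicator ({qJ} - {qI}) q \<partial>\<mu>)"
    apply (rule nn_integral_cong_AE) using ae by eventually_elim (auto simp: indicator_def)
  also have "\<dots> = f qI * emeasure \<mu> {qI} + f qJ * emeasure \<mu> ({qJ} - {qI})"
    using s1 by (simp add: nn_integral_add nn_integral_cmult_indicator)
  also have "\<dots> = ennreal aI * f qI + ennreal aJ * f qJ"
  proof (cases "qI = qJ")
    case True
    have "emeasure \<mu> {qI} = ennreal (aI + aJ)" using True em[of "{qI}"] by simp
    moreover have "emeasure \<mu> ({qJ} - {qI}) = 0" using True by simp
    ultimately show ?thesis using a True by (simp add: ennreal_plus distrib_left mult.commute)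
  next
    case False
    have "emeasure \<mu> {qI} = ennreal aI" using False em[of "{qI}"] by simp
    moreover have "emeasure \<mu> ({qJ} - {qI}) = ennreal aJ" using False em[of "{qJ} - {qI}"] by simp
    ultimately show ?thesis by (simp add: mult.commute)
  qed
  finally show ?thesis .
qed

lemma return_two_point: "two_point 1 p 0 p (return borel p)"
  by (simp add: two_point_def ennreal_indicator)

lemma two_point_splitting:
  assumes tp: "two_point aI qI aJ qJ \<mu>" and a: "0 \<le> aI" "0 \<le> aJ" "aI + aJ = 1"
    and q: "qI \<in> bsimplex" "qJ \<in> bsimplex"
  shows "\<mu> \<in> splittings (aI *\<^sub>R qI + aJ *\<^sub>R qJ)"
proof -
  define g where "g b = (if b then qI else qJ)" for b
  define \<nu> where "\<nu> = distr (measure_pmf (bernoulli_pmf aI)) borel g"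
  have aI1: "aI \<le> 1" using a by simp
  have gm: "g \<in> measurable (measure_pmf (bernoulli_pmf aI)) borel" by simp
  have eq: "\<mu> = \<nu>"
  proof (rule measure_eqI)
    show "sets \<mu> = sets \<nu>" using tp by (simp add: two_point_def \<nu>_def)
    fix A assume "A \<in> sets \<mu>"
    hence A: "A \<in> sets borel" using tp by (simp add: two_point_def)
    have "emeasure \<nu> A = emeasure (measure_pmf (bernoulli_pmf aI)) (g -` A)"
      unfolding \<nu>_def using A by (simp add: emeasure_distr)
    also have "\<dots> = (\<integral>\<^sup>+ b. indicator (g -` A) b \<partial>bernoulli_pmf aI)"
      by (simp add: nn_integral_indicator)
    also have "\<dots> = ennreal (aI * indicator A qI + aJ * indicator A qJ)"
      using a aI1 by (simp add: g_def indicator_def ennreal_mult' mult.commute)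
    finally show "emeasure \<mu> A = emeasure \<nu> A" using tp A by (simp add: two_point_def)
  qed
  have ps: "prob_space \<nu>" unfolding \<nu>_def by (rule prob_space.prob_space_distr) (simp_all add: measure_pmf.prob_space_axioms)
  have fin: "finite (set_pmf (bernoulli_pmf aI))" by simp
  have int: "integrable \<nu> (\<lambda>q. q)"
    unfolding \<nu>_def by (subst integrable_distr_eq[OF gm]) (auto intro: integrable_measure_pmf_finite[OF fin])
  have "integral\<^sup>L \<nu> (\<lambda>q. q) = (LINT b|measure_pmf (bernoulli_pmf aI). g b)"
    unfolding \<nu>_def by (rule integral_distr[OF gm]) simp
  also have "\<dots> = (\<Sum>b\<in>UNIV. pmf (bernoulli_pmf aI) b *\<^sub>R g b)"
    by (rule integral_measure_pmf) auto
  also have "\<dots> = aI *\<^sub>R qI + aJ *\<^sub>R qJ"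
    using a aI1 by (simp add: UNIV_bool g_def)
  finally have ii: "integral\<^sup>L \<nu> (\<lambda>q. q) = aI *\<^sub>R qI + aJ *\<^sub>R qJ" .
  have "emeasure \<mu> bsimplex = 1"
    using tp q a by (simp add: two_point_def ennreal_plus[symmetric] del: ennreal_plus)
  moreover have "sets \<mu> = sets borel" using tp by (simp add: two_point_def)
  ultimately show ?thesis unfolding splittings_def using ps int ii by (simp only: eq mem_Collect_eq)
qed

lemma splitting_AE:
  assumes "\<mu> \<in> splittings p" shows "AE q in \<mu>. q \<in> bsimplex"
proof -
  interpret prob_space \<mu> using assms by (simp add: splittings_def)
  have "prob bsimplex = 1" using assms by (simp add: splittings_def measure_def)
  thus ?thesis by (rule AE_prob_1)
qed

lemma splitting_linear:
  fixes L :: "real^'w::finite \<Rightarrow> real"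
  assumes mu: "\<mu> \<in> splittings p" and L: "linear L" and pos: "\<And>q. q \<in> bsimplex \<Longrightarrow> 0 \<le> L q"
  shows "(\<integral>\<^sup>+ q. ennreal (L q) \<partial>\<mu>) = ennreal (L p)"
proof -
  have bl: "bounded_linear L" using L by (simp add: linear_conv_bounded_linear)
  have int: "integrable \<mu> (\<lambda>q. q)" and ip: "integral\<^sup>L \<mu> (\<lambda>q. q) = p" using mu by (auto simp: splittings_def)
  have "(\<integral>\<^sup>+ q. ennreal (L q) \<partial>\<mu>) = ennreal (integral\<^sup>L \<mu> (\<lambda>q. L q))"
    by (rule nn_integral_eq_integral[OF integrable_bounded_linear[OF bl int]])
       (use splitting_AE[OF mu] pos in \<open>auto elim!: AE_mp\<close>)
  also have "integral\<^sup>L \<mu> (\<lambda>q. L q) = L p" using integral_bounded_linear[OF bl int] ip by simp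
  finally show ?thesis .
qed



definition Vf :: "('w::finite \<Rightarrow> real) \<Rightarrow> real \<Rightarrow> real \<Rightarrow> ('w \<Rightarrow> 'w \<Rightarrow> real) \<Rightarrow> nat \<Rightarrow> real^'w \<Rightarrow> real" where
  "Vf r c \<delta> M N p = (\<Sum>n<N. (1 - \<delta>) * \<delta> ^ n * fc r c ((phi M ^^ n) p))"

lemma Vf_add[simp]: "Vf r c \<delta> M N (x + y) = Vf r c \<delta> M N x + Vf r c \<delta> M N y"
  unfolding Vf_def by (simp add: distrib_left sum.distrib)
lemma Vf_scale[simp]: "Vf r c \<delta> M N (t *\<^sub>R x) = t * Vf r c \<delta> M N x"
  unfolding Vf_def by (simp add: sum_distrib_left mult_ac)

lemma Vf_0[simp]: "Vf r c \<delta> M 0 p = 0" by (simp add: Vf_def)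

lemma Vf_Suc: "Vf r c \<delta> M (Suc N) p = (1 - \<delta>) * fc r c p + \<delta> * Vf r c \<delta> M N (phi M p)"
proof -
  have "Vf r c \<delta> M (Suc N) p = (1 - \<delta>) * \<delta> ^ 0 * fc r c ((phi M ^^ 0) p)
      + (\<Sum>n<N. (1 - \<delta>) * \<delta> ^ Suc n * fc r c ((phi M ^^ Suc n) p))"
    unfolding Vf_def by (rule sum.lessThan_Suc_shift)
  also have "(\<Sum>n<N. (1 - \<delta>) * \<delta> ^ Suc n * fc r c ((phi M ^^ Suc n) p))
     = (\<Sum>n<N. \<delta> * ((1 - \<delta>) * \<delta> ^ n * fc r c ((phi M ^^ n) (phi M p))))"
    by (intro sum.cong) (simp_all add: funpow_Suc_right del: funpow.simps)
  also have "\<dots> = \<delta> * Vf r c \<delta> M N (phi M p)" by (simp add: Vf_def sum_distrib_left)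
  finally show ?thesis by simp
qed

lemma Iset_borel[measurable]: "Iset r \<in> sets borel"
proof -
  have "Iset r = bsimplex \<inter> {p. 0 \<le> pairing p r}" by (auto simp: Iset_def)
  moreover have "closed {p::real^'a. 0 \<le> pairing p r}"
    unfolding pairing_def by (intro closed_Collect_le continuous_intros)
  ultimately have "closed (Iset r)" using closed_bsimplex by (metis closed_Int)
  thus ?thesis by (rule borel_closed)
qed

lemma Iset_bs: "p \<in> Iset r \<Longrightarrow> p \<in> bsimplex" by (simp add: Iset_def)

lemma fc_le1_G: "p \<in> Gset r c \<Longrightarrow> fc r c p \<le> 1"
proof -
  assume "p \<in> Gset r c"
  then obtain x where x: "\<forall>w. 0 \<le> x $ w \<and> x $ w \<le> p $ w" "(\<Sum>w\<in>UNIV. x $ w) = fc r c p" and p: "p \<in> bsimplex"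
    by (auto simp: Gset_def)
  have "(\<Sum>w\<in>UNIV. x $ w) \<le> (\<Sum>w\<in>UNIV. p $ w)" using x(1) by (intro sum_mono) auto
  thus ?thesis using x(2) p by (simp add: bsimplex_def)
qed

lemma feasible_le:
  assumes c: "c < 0" and f: "feasible_split r p aI qI aJ qJ"
  shows "aI \<le> fc r c p"
proof -
  have e: "fc r c p = aI * fc r c qI + aJ * fc r c qJ" using f by (simp add: feasible_split_def)
  have q1: "1 \<le> fc r c qI" using f fc_ge1[OF c, of qI r] by (simp add: feasible_split_def)
  have q0: "0 \<le> fc r c qJ" using f fc_nonneg[OF c, of qJ r] by (simp add: feasible_split_def)
  have a: "0 \<le> aI" "0 \<le> aJ" using f by (auto simp: feasible_split_def)
  have "aI * 1 \<le> aI * fc r c qI" by (rule mult_left_mono[OF q1 a(1)])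
  moreover have "0 \<le> aJ * fc r c qJ" using a(2) q0 by simp
  ultimately show ?thesis using e by linarith
qed

lemma G_I_fc: assumes c: "c < 0" "p \<in> Gset r c" "p \<in> Iset r" shows "fc r c p = 1"
  using fc_le1_G[OF c(2)] fc_ge1[OF c(1,3)] by simp

lemma G_feasible_exists:
  assumes p: "p \<in> Gset r c" and pos: "0 < fc r c p"
  shows "\<exists>qI qJ. feasible_split r p (fc r c p) qI (1 - fc r c p) qJ"
proof -
  obtain x where x: "\<forall>w. 0 \<le> x $ w \<and> x $ w \<le> p $ w" "0 \<le> pairing x r" "(\<Sum>w\<in>UNIV. x $ w) = fc r c p" and pb: "p \<in> bsimplex"
    using p by (auto simp: Gset_def)
  define A where "A = fc r c p"
  have A1: "A \<le> 1" using fc_le1_G[OF p] by (simp add: A_def)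
  define qI where "qI = (1 / A) *\<^sub>R x"
  define qJ where "qJ = (if A = 1 then p else (1 / (1 - A)) *\<^sub>R (p - x))"
  have Apos: "0 < A" using pos by (simp add: A_def)
  have "qI \<in> Iset r"
    using x Apos by (auto simp: qI_def Iset_def bsimplex_def A_def sum_divide_distrib[symmetric])
  moreover have "qJ \<in> bsimplex"
  proof (cases "A = 1")
    case False
    hence "0 < 1 - A" using A1 by simp
    moreover have "(\<Sum>w\<in>UNIV. (p - x) $ w) = 1 - A" using x(3) pb by (simp add: sum_subtractf bsimplex_def A_def)
    ultimately show ?thesis using False x(1) by (auto simp: qJ_def bsimplex_def sum_divide_distrib[symmetric])
  qed (use pb in \<open>simp add: qJ_def\<close>)
  moreover have "p = A *\<^sub>R qI + (1 - A) *\<^sub>R qJ"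
  proof (cases "A = 1")
    case True
    have "(\<Sum>w\<in>UNIV. (p - x) $ w) = 0" using x(3) pb True by (simp add: sum_subtractf bsimplex_def A_def)
    hence "\<forall>w\<in>UNIV. (p - x) $ w = 0" using x(1) by (subst sum_nonneg_eq_0_iff[symmetric]) auto
    hence "x = p" by (simp add: vec_eq_iff)
    thus ?thesis using True by (simp add: qI_def qJ_def)
  next
    case False
    thus ?thesis using Apos by (simp add: qI_def qJ_def)
  qed
  ultimately show ?thesis using Apos A1 unfolding feasible_split_def A_def[symmetric]
    by (intro exI[of _ qI] exI[of _ qJ]) simp
qed

lemma greedy_J:
  assumes c: "c < 0" and p: "p \<in> Gset r c"
    and f: "feasible_split r p aI qI aJ qJ"
    and mx: "\<forall>bI sI bJ sJ. feasible_split r p bI sI bJ sJ \<longrightarrow> bI \<le> aI"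
  shows "aI = fc r c p" "0 < aI \<Longrightarrow> qI \<in> Gset r c" "0 < aJ \<Longrightarrow> qJ \<in> Gset r c \<and> qJ \<notin> Iset r"
proof -
  have le: "aI \<le> fc r c p" by (rule feasible_le[OF c f])
  have ge: "fc r c p \<le> aI"
  proof (cases "0 < fc r c p")
    case True
    then obtain sI sJ where "feasible_split r p (fc r c p) sI (1 - fc r c p) sJ"
      using G_feasible_exists[OF p] by blast
    thus ?thesis using mx by blast
  next
    case False thus ?thesis using f by (simp add: feasible_split_def)
  qed
  show eq: "aI = fc r c p" using le ge by simp
  have fcp: "fc r c p = aI * fc r c qI + aJ * fc r c qJ" using f by (simp add: feasible_split_def)
  have q1: "1 \<le> fc r c qI" using f fc_ge1[OF c, of qI r] by (simp add: feasible_split_def)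
  have q0: "0 \<le> fc r c qJ" using f fc_nonneg[OF c, of qJ r] by (simp add: feasible_split_def)
  have a0: "0 \<le> aI" "0 \<le> aJ" using f by (auto simp: feasible_split_def)
  have t1: "0 \<le> aI * (fc r c qI - 1)" using a0 q1 by simp
  have t2: "0 \<le> aJ * fc r c qJ" using a0 q0 by simp
  have sum0: "aI * (fc r c qI - 1) + aJ * fc r c qJ = 0" using fcp eq by (simp add: algebra_simps)
  have z1: "aI * (fc r c qI - 1) = 0" and z2: "aJ * fc r c qJ = 0" using t1 t2 sum0 by linarith+
  show "qI \<in> Gset r c" if "0 < aI"
  proof -
    have "fc r c qI = 1" using z1 that by simp
    moreover have qI: "qI \<in> Iset r" using f by (simp add: feasible_split_def)
    ultimately show ?thesis unfolding Gset_def using qI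
      by (auto simp: Iset_def bsimplex_def intro!: exI[of _ qI])
  qed
  show "qJ \<in> Gset r c \<and> qJ \<notin> Iset r" if "0 < aJ"
  proof -
    have fz: "fc r c qJ = 0" using z2 that by simp
    have qJ: "qJ \<in> bsimplex" using f by (simp add: feasible_split_def)
    have "qJ \<in> Gset r c" unfolding Gset_def using qJ fz
      by (auto simp: bsimplex_def pairing_def intro!: exI[of _ 0])
    moreover have "qJ \<notin> Iset r" using fz fc_ge1[OF c, of qJ r] by auto
    ultimately show ?thesis by simp
  qed
qed



lemma cur_belief_snoc[simp]: "cur_belief M p1 (h @ [q]) = phi M q"
  by (simp add: cur_belief_def)

lemma cur_bs:
  assumes "m \<in> bsimplex" "0 \<le> lam" "lam \<le> 1" "p1 \<in> bsimplex" "h \<in> lists bsimplex"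
  shows "cur_belief (mix_chain m lam) p1 h \<in> bsimplex"
proof (cases "h = []")
  case False
  hence "last h \<in> bsimplex" using assms(5) by (meson in_listsD last_in_set)
  thus ?thesis using False phi_bs[OF assms(1-3)] by (simp add: cur_belief_def)
qed (use assms in \<open>simp add: cur_belief_def\<close>)

lemma Vf_nonneg:
  assumes "c < 0" "m \<in> bsimplex" "0 \<le> lam" "lam \<le> 1" "0 \<le> \<delta>" "\<delta> \<le> 1" "p \<in> bsimplex"
  shows "0 \<le> Vf r c \<delta> (mix_chain m lam) N p"
  unfolding Vf_def using assms
  by (intro sum_nonneg mult_nonneg_nonneg fc_nonneg phiN_bs) auto

lemma linear_step: "linear (\<lambda>q. (1 - \<delta>) * fc r c q + \<delta> * Vf r c \<delta> M N (phi M q))"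
  by (rule linearI) (simp_all add: algebra_simps)

lemma upper:
  assumes c: "c < 0" and m: "m \<in> bsimplex" and lam: "0 \<le> lam" "lam \<le> 1"
    and d: "0 \<le> \<delta>" "\<delta> \<le> 1" and p1: "p1 \<in> bsimplex"
    and val: "valid_strategy (mix_chain m lam) p1 \<sigma>"
  shows "h \<in> lists bsimplex \<Longrightarrow> trunc_payoff r \<delta> \<sigma> h N \<le>
     ennreal (Vf r c \<delta> (mix_chain m lam) N (cur_belief (mix_chain m lam) p1 h))"
proof (induction N arbitrary: h)
  case 0 show ?case by simp
next
  case (Suc N)
  define M where "M = mix_chain m lam"
  define p where "p = cur_belief M p1 h"
  have pb: "p \<in> bsimplex" using cur_bs[OF m lam p1 Suc.prems] by (simp add: p_def M_def)
  have mu: "\<sigma> h \<in> splittings p" using val Suc.prems by (simp add: valid_strategy_def p_def M_def)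
  have "trunc_payoff r \<delta> \<sigma> h (Suc N) = (\<integral>\<^sup>+ q. ennreal ((1 - \<delta>) * indicator (Iset r) q) + ennreal \<delta> * trunc_payoff r \<delta> \<sigma> (h @ [q]) N \<partial>\<sigma> h)"
    by simp
  also have "\<dots> \<le> (\<integral>\<^sup>+ q. ennreal ((1 - \<delta>) * fc r c q + \<delta> * Vf r c \<delta> M N (phi M q)) \<partial>\<sigma> h)"
  proof (rule nn_integral_mono_AE)
    show "AE q in \<sigma> h. ennreal ((1 - \<delta>) * indicator (Iset r) q) + ennreal \<delta> * trunc_payoff r \<delta> \<sigma> (h @ [q]) N
        \<le> ennreal ((1 - \<delta>) * fc r c q + \<delta> * Vf r c \<delta> M N (phi M q))"
      using splitting_AE[OF mu]
    proof eventually_elim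
      case (elim q)
      have ih: "trunc_payoff r \<delta> \<sigma> (h @ [q]) N \<le> ennreal (Vf r c \<delta> M N (phi M q))"
        using Suc.IH[of "h @ [q]"] Suc.prems elim by (simp add: M_def)
      have v0: "0 \<le> Vf r c \<delta> M N (phi M q)"
        unfolding M_def by (rule Vf_nonneg[OF c m lam d phi_bs[OF m lam elim]])
      have i: "indicator (Iset r) q \<le> fc r c q" by (rule fc_ind[OF c elim])
      have i0: "0 \<le> (indicator (Iset r) q :: real)" by simp
      have "ennreal ((1 - \<delta>) * indicator (Iset r) q) + ennreal \<delta> * trunc_payoff r \<delta> \<sigma> (h @ [q]) N
          \<le> ennreal ((1 - \<delta>) * indicator (Iset r) q) + ennreal \<delta> * ennreal (Vf r c \<delta> M N (phi M q))"
        by (intro add_left_mono mult_left_mono ih) simp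
      also have "\<dots> = ennreal ((1 - \<delta>) * indicator (Iset r) q + \<delta> * Vf r c \<delta> M N (phi M q))"
        using d v0 i0 by (simp add: ennreal_mult ennreal_plus)
      also have "\<dots> \<le> ennreal ((1 - \<delta>) * fc r c q + \<delta> * Vf r c \<delta> M N (phi M q))"
        using d i by (intro ennreal_leI add_right_mono mult_left_mono) auto
      finally show ?case .
    qed
  qed
  also have "\<dots> = ennreal ((1 - \<delta>) * fc r c p + \<delta> * Vf r c \<delta> M N (phi M p))"
  proof (rule splitting_linear[OF mu linear_step])
    fix q :: "real^'a" assume q: "q \<in> bsimplex"
    show "0 \<le> (1 - \<delta>) * fc r c q + \<delta> * Vf r c \<delta> M N (phi M q)"
      using fc_nonneg[OF c q] Vf_nonneg[OF c m lam d phi_bs[OF m lam q]] d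
      by (simp add: M_def)
  qed
  also have "\<dots> = ennreal (Vf r c \<delta> M (Suc N) p)" by (simp add: Vf_Suc)
  finally show ?case by (simp add: p_def M_def)
qed

lemma G_bs: "p \<in> Gset r c \<Longrightarrow> p \<in> bsimplex" by (simp add: Gset_def)

lemma greedy_value:
  assumes c: "c < 0" and m: "m \<in> Gset r c" and lam: "0 \<le> lam" "lam \<le> 1"
    and d: "0 \<le> \<delta>" "\<delta> \<le> 1" and gs: "greedy_selection r g"
  shows "cur_belief (mix_chain m lam) p1 h \<in> Gset r c \<Longrightarrow>
     trunc_payoff r \<delta> (greedy_strategy (mix_chain m lam) p1 g) h N =
     ennreal (Vf r c \<delta> (mix_chain m lam) N (cur_belief (mix_chain m lam) p1 h))"
proof (induction N arbitrary: h)
  case 0 show ?case by simp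
next
  case (Suc N)
  define M where "M = mix_chain m lam"
  define \<sigma> where "\<sigma> = greedy_strategy M p1 g"
  define p where "p = cur_belief M p1 h"
  have mb: "m \<in> bsimplex" using m by (rule G_bs)
  have pG: "p \<in> Gset r c" using Suc.prems by (simp add: p_def M_def)
  have pb: "p \<in> bsimplex" using pG by (rule G_bs)
  define F where "F q = ennreal ((1 - \<delta>) * indicator (Iset r) q) + ennreal \<delta> * trunc_payoff r \<delta> \<sigma> (h @ [q]) N" for q
  have IHq: "trunc_payoff r \<delta> \<sigma> (h @ [q]) N = ennreal (Vf r c \<delta> M N (phi M q))" if "q \<in> Gset r c" for q
    using Suc.IH[of "h @ [q]"] phi_G[OF m lam that] by (simp add: \<sigma>_def M_def)
  have V0: "0 \<le> Vf r c \<delta> M N (phi M q)" if "q \<in> Gset r c" for q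
    unfolding M_def by (rule Vf_nonneg[OF c mb lam d phi_bs[OF mb lam G_bs[OF that]]])
  have "trunc_payoff r \<delta> \<sigma> h (Suc N) = (\<integral>\<^sup>+ q. F q \<partial>g p)"
    by (simp add: F_def \<sigma>_def greedy_strategy_def p_def)
  also have "\<dots> = ennreal (Vf r c \<delta> M (Suc N) p)"
  proof (cases "p \<in> Iset r")
    case True
    have gp: "g p = return borel p" using gs True by (simp add: greedy_selection_def)
    have "(\<integral>\<^sup>+ q. F q \<partial>g p) = F p"
      unfolding gp using two_point_nn[OF return_two_point, of p F] by simp
    also have "\<dots> = ennreal (1 - \<delta>) + ennreal \<delta> * ennreal (Vf r c \<delta> M N (phi M p))"
      using True IHq[OF pG] by (simp add: F_def)
    also have "\<dots> = ennreal ((1 - \<delta>) * fc r c p + \<delta> * Vf r c \<delta> M N (phi M p))"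
      using G_I_fc[OF c pG True] d V0[OF pG] by (simp add: ennreal_mult ennreal_plus)
    finally show ?thesis by (simp add: Vf_Suc)
  next
    case False
    hence "p \<in> Jset r" using pb by (simp add: Jset_def)
    then obtain aI qI aJ qJ where f: "feasible_split r p aI qI aJ qJ"
      and mx: "\<forall>bI sI bJ sJ. feasible_split r p bI sI bJ sJ \<longrightarrow> bI \<le> aI"
      and tp: "two_point aI qI aJ qJ (g p)"
      using gs unfolding greedy_selection_def by blast
    have a0: "0 \<le> aI" "0 \<le> aJ" and qI: "qI \<in> Iset r" and peq: "p = aI *\<^sub>R qI + aJ *\<^sub>R qJ"
      using f by (auto simp: feasible_split_def)
    note gJ = greedy_J[OF c pG f mx]
    have tI: "ennreal aI * F qI = ennreal (aI * ((1 - \<delta>) + \<delta> * Vf r c \<delta> M N (phi M qI)))"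
    proof (cases "aI = 0")
      case False
      hence qG: "qI \<in> Gset r c" using gJ(2) a0 by simp
      have "F qI = ennreal ((1 - \<delta>) + \<delta> * Vf r c \<delta> M N (phi M qI))"
        using qI IHq[OF qG] d V0[OF qG] by (simp add: F_def ennreal_mult ennreal_plus)
      thus ?thesis using a0 by (simp add: ennreal_mult')
    qed simp
    have tJ: "ennreal aJ * F qJ = ennreal (aJ * (\<delta> * Vf r c \<delta> M N (phi M qJ)))"
    proof (cases "aJ = 0")
      case False
      hence qG: "qJ \<in> Gset r c" and qn: "qJ \<notin> Iset r" using gJ(3) a0 by auto
      have "F qJ = ennreal (\<delta> * Vf r c \<delta> M N (phi M qJ))"
        using qn IHq[OF qG] d V0[OF qG] by (simp add: F_def ennreal_mult)
      thus ?thesis using a0 by (simp add: ennreal_mult')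
    qed simp
    have "(\<integral>\<^sup>+ q. F q \<partial>g p) = ennreal aI * F qI + ennreal aJ * F qJ"
      by (rule two_point_nn[OF tp a0])
    also have "\<dots> = ennreal (aI * ((1 - \<delta>) + \<delta> * Vf r c \<delta> M N (phi M qI)) + aJ * (\<delta> * Vf r c \<delta> M N (phi M qJ)))"
    proof -
      have n1: "0 \<le> aI * ((1 - \<delta>) + \<delta> * Vf r c \<delta> M N (phi M qI))"
      proof (cases "aI = 0")
        case False
        hence qG: "qI \<in> Gset r c" using gJ(2) a0 by simp
        thus ?thesis using a0 d V0[OF qG] by simp
      qed simp
      have n2: "0 \<le> aJ * (\<delta> * Vf r c \<delta> M N (phi M qJ))"
      proof (cases "aJ = 0")
        case False
        hence qG: "qJ \<in> Gset r c" using gJ(3) a0 by auto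
        thus ?thesis using a0 d V0[OF qG] by simp
      qed simp
      show ?thesis using n1 n2 tI tJ by (simp add: ennreal_plus)
    qed
    also have "aI * ((1 - \<delta>) + \<delta> * Vf r c \<delta> M N (phi M qI)) + aJ * (\<delta> * Vf r c \<delta> M N (phi M qJ))
        = (1 - \<delta>) * fc r c p + \<delta> * Vf r c \<delta> M N (phi M p)"
      using gJ(1) peq by (simp add: algebra_simps)
    finally show ?thesis by (simp add: Vf_Suc)
  qed
  finally show ?case by (simp add: p_def \<sigma>_def M_def)
qed

lemma g_splitting:
  assumes gs: "greedy_selection r g" and p: "p \<in> bsimplex"
  shows "g p \<in> splittings p"
proof (cases "p \<in> Iset r")
  case True
  hence "g p = return borel p" using gs by (simp add: greedy_selection_def)
  thus ?thesis using two_point_splitting[OF return_two_point, of p] p by simp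
next
  case False
  hence "p \<in> Jset r" using p by (simp add: Jset_def)
  then obtain aI qI aJ qJ where f: "feasible_split r p aI qI aJ qJ"
    and tp: "two_point aI qI aJ qJ (g p)"
    using gs unfolding greedy_selection_def by blast
  thus ?thesis using two_point_splitting[OF tp] Iset_bs by (auto simp: feasible_split_def)
qed

lemma rhat_G:
  assumes c: "c < 0" and gs: "greedy_selection r g" and pG: "p \<in> Gset r c"
  shows "rhat r p = fc r c p"
  unfolding rhat_def
proof (rule cSup_eq_maximum)
  have pb: "p \<in> bsimplex" using pG by (rule G_bs)
  have "measure (g p) (Iset r) = fc r c p"
  proof (cases "p \<in> Iset r")
    case True
    hence "g p = return borel p" using gs by (simp add: greedy_selection_def)
    thus ?thesis using True G_I_fc[OF c pG True] by (simp add: measure_return)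
  next
    case False
    hence "p \<in> Jset r" using pb by (simp add: Jset_def)
    then obtain aI qI aJ qJ where f: "feasible_split r p aI qI aJ qJ"
      and mx: "\<forall>bI sI bJ sJ. feasible_split r p bI sI bJ sJ \<longrightarrow> bI \<le> aI"
      and tp: "two_point aI qI aJ qJ (g p)"
      using gs unfolding greedy_selection_def by blast
    have a0: "0 \<le> aI" "0 \<le> aJ" and qI: "qI \<in> Iset r" using f by (auto simp: feasible_split_def)
    note gJ = greedy_J[OF c pG f mx]
    have z: "aJ * indicator (Iset r) qJ = 0"
      using gJ(3) a0 by (cases "aJ = 0") auto
    have "emeasure (g p) (Iset r) = ennreal (aI * indicator (Iset r) qI + aJ * indicator (Iset r) qJ)"
      using tp by (simp add: two_point_def)
    hence "emeasure (g p) (Iset r) = ennreal aI"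
      using qI by (simp only: z) simp
    thus ?thesis using gJ(1) a0 by (simp add: measure_def)
  qed
  hence "\<exists>\<mu>. fc r c p = measure \<mu> (Iset r) \<and> \<mu> \<in> splittings p"
    using g_splitting[OF gs pb] by (intro exI[of _ "g p"]) simp
  thus "fc r c p \<in> {measure \<mu> (Iset r) |\<mu>. \<mu> \<in> splittings p}"
    by simp
  fix y assume "y \<in> {measure \<mu> (Iset r) |\<mu>. \<mu> \<in> splittings p}"
  then obtain \<mu> where mu: "\<mu> \<in> splittings p" and y: "y = measure \<mu> (Iset r)" by blast
  have sets: "sets \<mu> = sets borel" using mu by (simp add: splittings_def)
  have "emeasure \<mu> (Iset r) = (\<integral>\<^sup>+ q. indicator (Iset r) q \<partial>\<mu>)"
    using sets by (simp add: nn_integral_indicator)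
  also have "\<dots> \<le> (\<integral>\<^sup>+ q. ennreal (fc r c q) \<partial>\<mu>)"
  proof (rule nn_integral_mono_AE)
    show "AE q in \<mu>. indicator (Iset r) q \<le> ennreal (fc r c q)"
      using splitting_AE[OF mu]
    proof eventually_elim
      case (elim q)
      have "ennreal (indicator (Iset r) q) \<le> ennreal (fc r c q)"
        by (rule ennreal_leI[OF fc_ind[OF c elim]])
      thus ?case by (simp add: ennreal_indicator)
    qed
  qed
  also have "\<dots> = ennreal (fc r c p)"
    by (rule splitting_linear[OF mu linear_fc fc_nonneg[OF c]])
  finally have "emeasure \<mu> (Iset r) \<le> ennreal (fc r c p)" .
  thus "y \<le> fc r c p" using y fc_nonneg[OF c pb] by (simp add: measure_def enn2real_leI)
qed



theorem theorem5:
  fixes m :: "real^'w::finite" and lam \<delta> :: real and r :: "'w \<Rightarrow> real"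
    and e :: "nat \<Rightarrow> 'w" and k :: nat and p1 :: "real^'w"
    and g :: "real^'w \<Rightarrow> (real^'w) measure"
  assumes "m \<in> bsimplex"
    and "0 \<le> lam" and "lam < 1"
    and "irreducible_chain (mix_chain m lam)"
    and "0 \<le> \<delta>" and "\<delta> < 1"
    and "neg_order r e"
    and "1 \<le> k" and "k \<le> card (Oneg r)"
    and "m \<in> Obar r e k"
    and "p1 \<in> Obar r e k"
    and "greedy_selection r g"
  shows "payoff r \<delta> (greedy_strategy (mix_chain m lam) p1 g) = gamma_star (mix_chain m lam) r \<delta> p1
       \<and> valid_strategy (mix_chain m lam) p1 (greedy_strategy (mix_chain m lam) p1 g)
       \<and> payoff r \<delta> (greedy_strategy (mix_chain m lam) p1 g) = Vdelta (mix_chain m lam) r \<delta> p1"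
proof -
  note mb = assms(1)
  have lam: "0 \<le> lam" "lam \<le> 1" using assms(2,3) by auto
  have d: "0 \<le> \<delta>" "\<delta> \<le> 1" using assms(5,6) by auto
  note gs = assms(12)
  define M where "M = mix_chain m lam"
  define c where "c = r (e k)"
  define \<sigma> where "\<sigma> = greedy_strategy M p1 g"
  have "e k \<in> Oneg r" using assms(7,8,9) by (auto simp: neg_order_def bij_betw_def)
  hence c: "c < 0" by (simp add: c_def Oneg_def)
  have mG: "m \<in> Gset r c" unfolding c_def by (rule Obar_sub_G[OF assms(7,8,9,10)])
  have pG: "p1 \<in> Gset r c" unfolding c_def by (rule Obar_sub_G[OF assms(7,8,9,11)])
  have p1b: "p1 \<in> bsimplex" using pG by (rule G_bs)
  define t where "t n = (1 - \<delta>) * \<delta> ^ n * fc r c ((phi M ^^ n) p1)" for n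
  have iterG: "(phi M ^^ n) p1 \<in> Gset r c" for n
    unfolding M_def by (rule phiN_G[OF mG lam pG])
  have t0: "0 \<le> t n" for n
    unfolding t_def using d fc_nonneg[OF c G_bs[OF iterG]] by simp
  have tle: "t n \<le> (1 - \<delta>) * \<delta> ^ n" for n
    unfolding t_def using d fc_le1_G[OF iterG] by (intro mult_left_le) simp_all
  have sumg: "summable (\<lambda>n. (1 - \<delta>) * \<delta> ^ n)"
    using d assms(6) by (intro summable_mult summable_geometric) simp
  have sumt: "summable t"
    by (rule summable_comparison_test'[OF sumg]) (use t0 tle in simp)
  define gsum where "gsum = suminf t"
  have gs0: "0 \<le> gsum" unfolding gsum_def using sumt t0 by (rule suminf_nonneg)
  have Vt: "Vf r c \<delta> M N p1 = (\<Sum>n<N. t n)" for N by (simp add: Vf_def t_def)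
  have Vle: "Vf r c \<delta> M N p1 \<le> gsum" for N
    unfolding Vt gsum_def using sumt t0 by (intro sum_le_suminf) auto
  have SUPeq: "(SUP N. ennreal (Vf r c \<delta> M N p1)) = ennreal gsum"
  proof -
    have "(SUP N. ennreal (Vf r c \<delta> M N p1)) = (SUP N. \<Sum>n<N. ennreal (t n))"
      unfolding Vt using t0 by (simp add: sum_ennreal)
    also have "\<dots> = (\<Sum>n. ennreal (t n))" by (rule suminf_eq_SUP[symmetric])
    also have "\<dots> = ennreal gsum" unfolding gsum_def using t0 sumt by (rule suminf_ennreal2)
    finally show ?thesis .
  qed
  have trg: "trunc_payoff r \<delta> \<sigma> [] N = ennreal (Vf r c \<delta> M N p1)" for N
    using greedy_value[OF c mG lam d gs, where ?p1.0=p1 and h="[]" and N=N] pG by (simp add: cur_belief_def \<sigma>_def M_def)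
  have pay: "payoff r \<delta> \<sigma> = gsum"
    unfolding payoff_def trg SUPeq using gs0 by simp
  have gstar: "gamma_star M r \<delta> p1 = gsum"
    unfolding gamma_star_def gsum_def t_def using rhat_G[OF c gs iterG] by simp
  have valid: "valid_strategy M p1 \<sigma>"
    unfolding valid_strategy_def \<sigma>_def greedy_strategy_def M_def
    using g_splitting[OF gs] cur_bs[OF mb lam p1b] by blast
  have ub: "payoff r \<delta> \<sigma>' \<le> gsum" if v: "valid_strategy M p1 \<sigma>'" for \<sigma>'
  proof -
    have "trunc_payoff r \<delta> \<sigma>' [] N \<le> ennreal gsum" for N
    proof -
      have "trunc_payoff r \<delta> \<sigma>' [] N \<le> ennreal (Vf r c \<delta> M N p1)"
        using upper[OF c mb lam d p1b v[unfolded M_def], where h="[]" and N=N] by (simp add: cur_belief_def M_def)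
      also have "\<dots> \<le> ennreal gsum" using Vle by (rule ennreal_leI)
      finally show ?thesis .
    qed
    hence "(SUP N. trunc_payoff r \<delta> \<sigma>' [] N) \<le> ennreal gsum" by (rule SUP_least)
    thus ?thesis unfolding payoff_def using gs0 by (rule enn2real_leI[rotated])
  qed
  have vd: "Vdelta M r \<delta> p1 = gsum"
    unfolding Vdelta_def
  proof (rule cSup_eq_maximum)
    show "gsum \<in> payoff r \<delta> ` {\<sigma>. valid_strategy M p1 \<sigma>}" using valid pay by force
    show "x \<le> gsum" if "x \<in> payoff r \<delta> ` {\<sigma>. valid_strategy M p1 \<sigma>}" for x
      using that ub by auto
  qed
  show ?thesis using pay gstar valid vd by (simp add: \<sigma>_def M_def)
qed


end
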